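(* In the multi-colored system with $n\ge2$, let $\mathbf a_0\in(0,\infty)^n$ with $\rho_0=a_0^1+\dots+a_0^n$ in the interior of the domain of $\varphi$. Then the Frame condition (FC) holds at $\mathbf a_0$ (equivalently: $\Gamma_{ij}(\mathbf a_0)=0$ for $i\ne j$ and $\tilde g_i(\mathbf a_0)\Gamma_{jj}(\mathbf a_0)=\tilde g_j(\mathbf a_0)\Gamma_{ii}(\mathbf a_0)$ for all $i\ne j$) if and only if $\varphi'(\rho_0)=\varphi(\rho_0)/\rho_0$, which in turn is equivalent to $\sigma^2(\rho_0)=\rho_0$, where $\sigma^2(\rho)$ is the variance of $\nu_\rho$.
   Context: Multi-colored zero-range system: given a single-species rate $g:\mathbb Z_+\to[0,\infty)$ with $g(k)=0\iff k=0$, define $g_i(\mathbf k)=g(|\mathbf k|)k^i/|\mathbf k|$ for $\mathbf k\in\mathbb Z_+^n$, $|\mathbf k|=\sum_ik^i$. For the single-species system, $\nu_\rho(k)=Z_{\varphi}^{-1}\varphi^k/g(k)!$ with $g(k)!=g(1)\cdots g(k)$, $Z_\varphi=\sum_k\varphi^k/g(k)!$, and $\varphi=\varphi(\rho)$ the fugacity chosen so that $\nu_\rho$ has mean $\rho$. The multi-colored invariant law of density $\mathbf a$ is $\nu_{\mathbf a}(\mathbf k)=\nu_\rho(|\mathbf k|)\frac{|\mathbf k|!}{k^1!\cdots k^n!}\prod_i(a^i/\rho)^{k^i}$, $\rho=\sum_ia^i$. $\tilde g_i(\mathbf a)=E_{\nu_{\mathbf a}}[g_i]$; $\Gamma(\mathbf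 a)$ is the covariance matrix of $\mathbf k$ under $\nu_{\mathbf a}$. Frame condition (FC) at $\mathbf a_0$: there is $\lambda$ with $\partial_{a^i}\tilde g_i(\mathbf a_0)=\lambda$ for all $i$ and $\partial_{a^j}\tilde g_i(\mathbf a_0)=0$ for $i\ne j$. *)

theory Defs
  imports "HOL-Analysis.Analysis"
begin

definition gfact :: "(nat \<Rightarrow> real) \<Rightarrow> nat \<Rightarrow> real" where
  "gfact g k = (\<Prod>i\<in>{1..k}. g i)"

definition wt :: "(nat \<Rightarrow> real) \<Rightarrow> real \<Rightarrow> nat \<Rightarrow> real" where
  "wt g phi k = phi ^ k / gfact g k"

definition Zf :: "(nat \<Rightarrow> real) \<Rightarrow> real \<Rightarrow> real" where
  "Zf g phi = (\<Sum>k. wt g phi k)"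

definition meanf :: "(nat \<Rightarrow> real) \<Rightarrow> real \<Rightarrow> real" where
  "meanf g phi = (\<Sum>k. real k * wt g phi k) / Zf g phi"

definition adm_fug :: "(nat \<Rightarrow> real) \<Rightarrow> real \<Rightarrow> bool" where
  "adm_fug g phi \<longleftrightarrow> phi \<ge> 0 \<and> summable (wt g phi) \<and> summable (\<lambda>k. real k * wt g phi k)"

definition rho_dom :: "(nat \<Rightarrow> real) \<Rightarrow> real set" where
  "rho_dom g = {rho. \<exists>phi. adm_fug g phi \<and> meanf g phi = rho}"

definition fug :: "(nat \<Rightarrow> real) \<Rightarrow> real \<Rightarrow> real" where
  "fug g rho = (THE phi. adm_fug g phi \<and> meanf g phi = rho)"

definition nu1 :: "(nat \<Rightarrow> real) \<Rightarrow> real \<Rightarrow> nat \<Rightarrow> real" where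
  "nu1 g rho m = wt g (fug g rho) m / Zf g (fug g rho)"

definition sigma2 :: "(nat \<Rightarrow> real) \<Rightarrow> real \<Rightarrow> real" where
  "sigma2 g rho = (\<Sum>m. (real m)^2 * nu1 g rho m) - rho^2"

definition tot :: "('n::finite \<Rightarrow> nat) \<Rightarrow> nat" where
  "tot k = (\<Sum>i\<in>UNIV. k i)"

definition gi :: "(nat \<Rightarrow> real) \<Rightarrow> 'n::finite \<Rightarrow> ('n \<Rightarrow> nat) \<Rightarrow> real" where
  "gi g i k = g (tot k) * real (k i) / real (tot k)"

definition nuA :: "(nat \<Rightarrow> real) \<Rightarrow> ('n::finite \<Rightarrow> real) \<Rightarrow> ('n \<Rightarrow> nat) \<Rightarrow> real" where
  "nuA g a k = (let rho = (\<Sum>i\<in>UNIV. a i) in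
     nu1 g rho (tot k) * (fact (tot k) / (\<Prod>i\<in>UNIV. fact (k i)))
       * (\<Prod>i\<in>UNIV. (a i / rho) ^ (k i)))"

definition EA :: "(nat \<Rightarrow> real) \<Rightarrow> ('n::finite \<Rightarrow> real) \<Rightarrow> (('n \<Rightarrow> nat) \<Rightarrow> real) \<Rightarrow> real" where
  "EA g a f = infsum (\<lambda>k. nuA g a k * f k) UNIV"

definition gtilde :: "(nat \<Rightarrow> real) \<Rightarrow> ('n::finite \<Rightarrow> real) \<Rightarrow> 'n \<Rightarrow> real" where
  "gtilde g a i = EA g a (gi g i)"

definition Gamma :: "(nat \<Rightarrow> real) \<Rightarrow> ('n::finite \<Rightarrow> real) \<Rightarrow> 'n \<Rightarrow> 'n \<Rightarrow> real" where
  "Gamma g a i j = EA g a (\<lambda>k. real (k i) * real (k j))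
     - EA g a (\<lambda>k. real (k i)) * EA g a (\<lambda>k. real (k j))"

definition FC :: "(nat \<Rightarrow> real) \<Rightarrow> ('n::finite \<Rightarrow> real) \<Rightarrow> bool" where
  "FC g a0 \<longleftrightarrow> (\<exists>lam.
     (\<forall>i. ((\<lambda>t. gtilde g (a0(i := t)) i) has_real_derivative lam) (at (a0 i))) \<and>
     (\<forall>i j. i \<noteq> j \<longrightarrow> ((\<lambda>t. gtilde g (a0(j := t)) i) has_real_derivative 0) (at (a0 j))))"

end

theory Submission
  imports Defs
begin


definition fib :: "nat \<Rightarrow> ('n::finite \<Rightarrow> nat) set" where
  "fib m = {k. tot k = m}"

definition Tp :: "('n::finite \<Rightarrow> real) \<Rightarrow> ('n \<Rightarrow> nat) \<Rightarrow> real" where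
  "Tp p k = (\<Prod>i\<in>UNIV. p i ^ k i / fact (k i))"

definition Fm :: "('n::finite \<Rightarrow> real) \<Rightarrow> (('n \<Rightarrow> nat) \<Rightarrow> real) \<Rightarrow> nat \<Rightarrow> real" where
  "Fm p h m = fact m * (\<Sum>k\<in>fib m. Tp p k * h k)"

lemma tot_ge: "k j \<le> tot k"
  unfolding tot_def by (rule member_le_sum) auto

lemma finite_fib: "finite (fib m :: ('n::finite \<Rightarrow> nat) set)"
proof -
  have "fib m \<subseteq> PiE UNIV (\<lambda>_::'n. {..m})"
  proof
    fix k :: "'n \<Rightarrow> nat" assume "k \<in> fib m"
    then have "\<And>i. k i \<le> m" using tot_ge[of k] unfolding fib_def by auto
    then show "k \<in> PiE UNIV (\<lambda>_. {..m})" by (auto simp: PiE_def extensional_def)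
  qed
  moreover have "finite (PiE UNIV (\<lambda>_::'n. {..m}))" by (rule finite_PiE) auto
  ultimately show ?thesis by (rule finite_subset)
qed

lemma tot_upd: "tot (k(j := x)) = tot k - k j + x"
proof -
  have "tot k = k j + (\<Sum>i\<in>UNIV-{j}. k i)" unfolding tot_def
    by (simp add: sum.remove[of UNIV j])
  moreover have "tot (k(j:=x)) = x + (\<Sum>i\<in>UNIV-{j}. k i)" unfolding tot_def
    by (subst sum.remove[of UNIV j]) (auto intro!: sum.cong)
  ultimately show ?thesis by simp
qed

lemma Tp_upd: "real (Suc (k j)) * Tp p (k(j := Suc (k j))) = p j * Tp p k"
proof -
  have a: "Tp p (k(j := Suc (k j))) = p j ^ Suc (k j) / fact (Suc (k j)) * (\<Prod>i\<in>UNIV-{j}. p i ^ k i / fact (k i))"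
    unfolding Tp_def by (subst prod.remove[of UNIV j]) (auto intro!: prod.cong)
  have b: "Tp p k = p j ^ k j / fact (k j) * (\<Prod>i\<in>UNIV-{j}. p i ^ k i / fact (k i))"
    unfolding Tp_def by (simp add: prod.remove[of UNIV j])
  show ?thesis unfolding a b by (simp add: field_simps del: of_nat_Suc)
qed

lemma fib0: "fib 0 = {(\<lambda>_. 0)}"
proof -
  have "tot k = 0 \<longleftrightarrow> k = (\<lambda>_. 0)" for k :: "'a \<Rightarrow> nat"
    unfolding tot_def by (simp add: fun_eq_iff)
  then show ?thesis unfolding fib_def by auto
qed

lemma sum_fib_shift:
  fixes h :: "('n::finite \<Rightarrow> nat) \<Rightarrow> real"
  shows "(\<Sum>k\<in>fib m. h (k(j := Suc (k j)))) = (\<Sum>k\<in>{k\<in>fib (Suc m). k j > 0}. h k)"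
proof (rule sum.reindex_bij_witness[where i = "\<lambda>k. k(j := k j - 1)" and j = "\<lambda>k. k(j := Suc (k j))"])
  fix a :: "'n \<Rightarrow> nat" assume a: "a \<in> fib m"
  show "(a(j := Suc (a j)))(j := (a(j := Suc (a j))) j - 1) = a" by simp
  have "a j \<le> tot a" by (rule tot_ge)
  with a show "a(j := Suc (a j)) \<in> {k\<in>fib (Suc m). k j > 0}"
    by (simp add: fib_def tot_upd)
next
  fix b :: "'n \<Rightarrow> nat" assume b: "b \<in> {k\<in>fib (Suc m). k j > 0}"
  then show "(b(j := b j - 1))(j := Suc ((b(j := b j - 1)) j)) = b" by auto
  have "b j \<le> tot b" by (rule tot_ge)
  with b show "b(j := b j - 1) \<in> fib m"
    by (simp add: fib_def tot_upd)
qed simp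

lemma sum_fib_shift2:
  fixes G :: "('n::finite \<Rightarrow> nat) \<Rightarrow> real"
  shows "(\<Sum>k\<in>{k\<in>fib (Suc m). k j > 0}. real (k j) * G k) = (\<Sum>k\<in>fib m. real (Suc (k j)) * G (k(j := Suc (k j))))"
  using sum_fib_shift[where h="\<lambda>k. real (k j) * G k" and m=m and j=j] by simp

lemma Fm_rec:
  "Fm p h (Suc m) = (\<Sum>j\<in>UNIV. p j * Fm p (\<lambda>k. h (k(j := Suc (k j)))) m)"
proof -
  have "Fm p h (Suc m) = fact m * (\<Sum>k\<in>fib (Suc m). real (tot k) * (Tp p k * h k))"
  proof -
    have "Fm p h (Suc m) = fact m * (real (Suc m) * (\<Sum>k\<in>fib (Suc m). Tp p k * h k))"
      unfolding Fm_def by (simp only: fact_Suc of_nat_mult mult.assoc mult.left_commute)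
    also have "\<dots> = fact m * (\<Sum>k\<in>fib (Suc m). real (tot k) * (Tp p k * h k))"
      by (simp only: sum_distrib_left) (intro arg_cong[where f="\<lambda>x. fact m * x"] sum.cong refl, simp add: fib_def)
    finally show ?thesis .
  qed
  also have "\<dots> = fact m * (\<Sum>j\<in>UNIV. \<Sum>k\<in>fib (Suc m). real (k j) * (Tp p k * h k))"
    unfolding tot_def of_nat_sum sum_distrib_right by (subst sum.swap) (rule refl)
  also have "\<dots> = fact m * (\<Sum>j\<in>UNIV. \<Sum>k\<in>{k\<in>fib (Suc m). k j > 0}. real (k j) * (Tp p k * h k))"
    by (rule arg_cong[where f="\<lambda>x. fact m * x"], rule sum.cong[OF refl], rule sum.mono_neutral_right) (auto simp: finite_fib)
  also have "\<dots> = fact m * (\<Sum>j\<in>UNIV. \<Sum>k\<in>fib m. real (Suc (k j)) * (Tp p (k(j := Suc (k j))) * h (k(j := Suc (k j)))))"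
    by (simp only: sum_fib_shift2)
  also have "\<dots> = (\<Sum>j\<in>UNIV. p j * Fm p (\<lambda>k. h (k(j := Suc (k j)))) m)"
    proof -
    have "\<And>j k. real (Suc (k j)) * (Tp p (k(j := Suc (k j))) * h (k(j := Suc (k j))))
           = p j * (Tp p k * h (k(j := Suc (k j))))"
      by (simp only: mult.assoc[symmetric] Tp_upd)
    then have "fact m * (\<Sum>j\<in>UNIV. \<Sum>k\<in>fib m. real (Suc (k j)) * (Tp p (k(j := Suc (k j))) * h (k(j := Suc (k j)))))
       = fact m * (\<Sum>j\<in>UNIV. p j * (\<Sum>k\<in>fib m. Tp p k * h (k(j := Suc (k j)))))"
      by (simp only: sum_distrib_left[symmetric])
    also have "\<dots> = (\<Sum>j\<in>UNIV. fact m * (p j * (\<Sum>k\<in>fib m. Tp p k * h (k(j := Suc (k j))))))"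
      by (rule sum_distrib_left)
    also have "\<dots> = (\<Sum>j\<in>UNIV. p j * Fm p (\<lambda>k. h (k(j := Suc (k j)))) m)"
      unfolding Fm_def by (rule sum.cong) (simp_all only: mult.left_commute)
    finally show ?thesis .
  qed
  finally show ?thesis .
qed

lemma Fm_add: "Fm p (\<lambda>k. h1 k + h2 k) m = Fm p h1 m + Fm p h2 m"
  unfolding Fm_def by (simp add: sum.distrib distrib_left)

lemma Fm_cmult: "Fm p (\<lambda>k. c * h k) m = c * Fm p h m"
  unfolding Fm_def by (simp add: sum_distrib_left mult.left_commute)

lemma Fm_cong: "(\<And>k. k \<in> fib m \<Longrightarrow> h k = h' k) \<Longrightarrow> Fm p h m = Fm p h' m"
  unfolding Fm_def by (simp cong: sum.cong)

lemma Fm_zero: "Fm p h 0 = h (\<lambda>_. 0)"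
  unfolding Fm_def fib0 Tp_def by simp

lemma Fm_const:
  assumes "(\<Sum>i\<in>UNIV. p i) = 1"
  shows "Fm p (\<lambda>_. c) m = c"
proof (induction m)
  case 0 then show ?case by (simp add: Fm_zero)
next
  case (Suc m)
  have "Fm p (\<lambda>_. c) (Suc m) = (\<Sum>j\<in>UNIV. p j * c)" by (simp add: Fm_rec Suc)
  also have "\<dots> = c" using assms by (simp add: sum_distrib_right[symmetric])
  finally show ?case .
qed

lemma upd_apply: "real ((k(j := Suc (k j))) i) = real (k i) + (if j = i then 1 else 0)"
  by simp

lemma delta1: "(\<Sum>j\<in>(UNIV::'n::finite set). p j * ((if j = i then 1 else 0) * x)) = p i * (x::real)"
proof -
  have "(\<Sum>j\<in>(UNIV::'n set). p j * ((if j = i then 1 else 0) * x)) = (\<Sum>j\<in>UNIV. if j = i then p j * x else 0)"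
    by (rule sum.cong) auto
  then show ?thesis by simp
qed

lemma delta2: "(\<Sum>j\<in>(UNIV::'n::finite set). p j * ((if j = i then 1 else 0) * (if j = l then 1 else 0))) = (if i = l then p i else (0::real))"
proof -
  have "(\<Sum>j\<in>(UNIV::'n set). p j * ((if j = i then 1 else 0) * (if j = l then 1 else 0))) = (\<Sum>j\<in>UNIV. if j = i then (if i = l then p j else 0) else 0)"
    by (rule sum.cong) auto
  then show ?thesis by simp
qed

lemma Fm_k1:
  assumes p1: "(\<Sum>i\<in>UNIV. p i) = 1"
  shows "Fm p (\<lambda>k. real (k i)) m = real m * p i"
proof (induction m)
  case 0 then show ?case by (simp add: Fm_zero)
next
  case (Suc m)
  have "Fm p (\<lambda>k. real (k i)) (Suc m) = (\<Sum>j\<in>UNIV. p j * (real m * p i + (if j = i then 1 else 0) * 1))"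
    unfolding Fm_rec upd_apply Fm_add Suc Fm_const[OF p1] by simp
  also have "\<dots> = (\<Sum>j\<in>UNIV. p j) * (real m * p i) + p i * 1"
    by (simp only: distrib_left sum.distrib sum_distrib_right[symmetric] delta1)
  also have "\<dots> = real (Suc m) * p i" using p1 by (simp add: algebra_simps)
  finally show ?case .
qed

lemma Fm_k2:
  assumes p1: "(\<Sum>i\<in>UNIV. p i) = 1"
  shows "Fm p (\<lambda>k. real (k i) * real (k l)) m =
           real m * (real m - 1) * p i * p l + (if i = l then real m * p i else 0)"
proof (induction m)
  case 0 then show ?case by (simp add: Fm_zero)
next
  case (Suc m)
  have e: "\<And>j. (\<lambda>k. real ((k(j := Suc (k j))) i) * real ((k(j := Suc (k j))) l)) =
     (\<lambda>k. real (k i) * real (k l) + ((if j = l then 1 else 0) * real (k i) + ((if j = i then 1 else 0) * real (k l)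
        + (if j = i then 1 else 0) * (if j = l then 1 else 0))))"
    by (auto simp: fun_eq_iff algebra_simps)
  have "Fm p (\<lambda>k. real (k i) * real (k l)) (Suc m) = (\<Sum>j\<in>UNIV. p j *
     ((real m * (real m - 1) * p i * p l + (if i = l then real m * p i else 0)) +
      ((if j = l then 1 else 0) * (real m * p i) + ((if j = i then 1 else 0) * (real m * p l)
        + (if j = i then 1 else 0) * (if j = l then 1 else 0)))))"
    unfolding Fm_rec e Fm_add Fm_cmult Suc Fm_const[OF p1] Fm_k1[OF p1] ..
  also have "\<dots> = (real m * (real m - 1) * p i * p l + (if i = l then real m * p i else 0)) * (\<Sum>j\<in>UNIV. p j)
      + p l * (real m * p i) + p i * (real m * p l) + (if i = l then p i else 0)"
    by (simp only: distrib_left sum.distrib sum_distrib_right[symmetric] delta1 delta2, simp add: algebra_simps)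
  also have "\<dots> = real (Suc m) * (real (Suc m) - 1) * p i * p l + (if i = l then real (Suc m) * p i else 0)"
    using p1 by (simp add: algebra_simps)
  finally show ?case .
qed

lemma nuA_eq: "nuA g a k = nu1 g (\<Sum>i\<in>UNIV. a i) (tot k) * fact (tot k) * Tp (\<lambda>i. a i / (\<Sum>i\<in>UNIV. a i)) k"
  unfolding nuA_def Tp_def Let_def by (simp add: prod_dividef prod.distrib[symmetric])

lemma fib_sum_nuA: "(\<Sum>k\<in>fib m. nuA g a k * f k) = nu1 g (\<Sum>i\<in>UNIV. a i) m * Fm (\<lambda>i. a i / (\<Sum>i\<in>UNIV. a i)) f m"
  unfolding nuA_eq Fm_def sum_distrib_left by (rule sum.cong) (auto simp: fib_def)

lemma has_sum_fibers:
  fixes h :: "('n::finite \<Rightarrow> nat) \<Rightarrow> real"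
  assumes nonneg: "\<And>k. h k \<ge> 0"
    and S: "(\<lambda>m. \<Sum>k\<in>fib m. h k) sums S"
  shows "infsum h UNIV = S"
proof -
  define G where "G m = (\<Sum>k\<in>fib m. h k)" for m
  have Gnn: "G m \<ge> 0" for m unfolding G_def by (rule sum_nonneg) (use nonneg in auto)
  have GS: "(G has_sum S) UNIV"
    by (rule sums_nonneg_imp_has_sum) (use S Gnn in \<open>simp_all add: G_def[abs_def]\<close>)
  have fibh: "(h has_sum G m) (fib m)" for m unfolding G_def by (rule has_sum_finiteI) (auto simp: finite_fib)
  have U: "(\<Union>m\<in>UNIV. fib m) = (UNIV :: ('n \<Rightarrow> nat) set)" by (auto simp: fib_def)
  have disj: "disjoint_family_on fib UNIV" by (auto simp: disjoint_family_on_def fib_def)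
  have "h summable_on (\<Union>m\<in>UNIV. fib m)"
    by (rule summable_on_UnionI[OF fibh _ _ disj]) (use GS has_sum_imp_summable nonneg in auto)
  then have "h summable_on UNIV" unfolding U .
  then have hI: "(h has_sum infsum h UNIV) UNIV" by (rule has_sum_infsum)
  have bij: "bij_betw snd (Sigma UNIV fib) (UNIV :: ('n \<Rightarrow> nat) set)"
    by (rule bij_betwI[where g="\<lambda>k. (tot k, k)"]) (auto simp: fib_def)
  have "((\<lambda>x. h (snd x)) has_sum infsum h UNIV) (Sigma UNIV fib)"
    using hI has_sum_reindex_bij_betw[OF bij] by blast
  then have "(G has_sum infsum h UNIV) UNIV"
    by (rule has_sum_SigmaD) (simp add: fibh)
  then show ?thesis using GS has_sum_unique by blast
qed

lemma EA_series:
  assumes nonneg: "\<And>k. nuA g a k * f k \<ge> 0"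
    and S: "(\<lambda>m. nu1 g (\<Sum>i\<in>UNIV. a i) m * Fm (\<lambda>i. a i / (\<Sum>i\<in>UNIV. a i)) f m) sums S"
  shows "EA g a f = S"
  unfolding EA_def by (rule has_sum_fibers) (use nonneg S in \<open>simp_all add: fib_sum_nuA\<close>)




locale zr =
  fixes g :: "nat \<Rightarrow> real"
  assumes g0: "g 0 = 0" and gpos: "\<And>k. k > 0 \<Longrightarrow> g k > 0"
begin

lemma gfact_pos: "gfact g n > 0"
  unfolding gfact_def by (rule prod_pos) (auto intro: gpos)

lemma gfact_Suc: "gfact g (Suc n) = gfact g n * g (Suc n)"
  unfolding gfact_def by (simp add: prod.nat_ivl_Suc' mult.commute)

lemma g_nonneg: "g k \<ge> 0"
  using gpos[of k] g0 by (cases k) auto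

lemma wt_nonneg: "x \<ge> 0 \<Longrightarrow> wt g x n \<ge> 0"
  unfolding wt_def using gfact_pos[of n] by simp

lemma wt_pos: "x > 0 \<Longrightarrow> wt g x n > 0"
  unfolding wt_def using gfact_pos[of n] by simp

lemma wt_0 [simp]: "wt g x 0 = 1"
  unfolding wt_def gfact_def by simp

lemma wt_g: "wt g x (Suc n) * g (Suc n) = x * wt g x n"
  unfolding wt_def gfact_Suc using gpos[of "Suc n"] gfact_pos[of n] by (simp add: field_simps)

lemma wt_mono: "0 \<le> x \<Longrightarrow> x \<le> y \<Longrightarrow> wt g x n \<le> wt g y n"
  unfolding wt_def using gfact_pos[of n] by (simp add: divide_right_mono power_mono)

definition cZ :: "nat \<Rightarrow> real" where "cZ n = inverse (gfact g n)"
definition cM :: "nat \<Rightarrow> real" where "cM n = real n * inverse (gfact g n)"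

lemma wt_cZ: "wt g x n = cZ n * x ^ n"
  unfolding wt_def cZ_def by (simp add: divide_inverse mult.commute)

lemma wt_cM: "real n * wt g x n = cM n * x ^ n"
  unfolding wt_def cM_def by (simp add: divide_inverse mult.commute)

lemma Zf_eq: "Zf g = (\<lambda>x. \<Sum>n. cZ n * x ^ n)"
  unfolding Zf_def[abs_def] wt_cZ ..

definition Mf :: "real \<Rightarrow> real" where "Mf x = (\<Sum>k. real k * wt g x k)"
definition Sf :: "real \<Rightarrow> real" where "Sf x = (\<Sum>k. (real k)^2 * wt g x k)"

lemma Mf_eq: "Mf = (\<lambda>x. \<Sum>n. cM n * x ^ n)"
  unfolding Mf_def[abs_def] wt_cM ..

lemma adm_le:
  assumes "adm_fug g y" "0 \<le> x" "x \<le> y"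
  shows "adm_fug g x"
proof -
  have "summable (wt g x)"
    by (rule summable_comparison_test[where g="wt g y"]) (use assms wt_nonneg wt_mono in \<open>auto simp: adm_fug_def\<close>)
  moreover have "summable (\<lambda>k. real k * wt g x k)"
    by (rule summable_comparison_test[where g="\<lambda>k. real k * wt g y k"])
       (use assms wt_nonneg wt_mono in \<open>auto simp: adm_fug_def intro!: mult_left_mono\<close>)
  ultimately show ?thesis using assms by (simp add: adm_fug_def)
qed

lemma Zf_pos:
  assumes "x \<ge> 0" "summable (wt g x)"
  shows "Zf g x > 0"
proof -
  have w0: "0 < wt g x 0" by simp
  show ?thesis unfolding Zf_def by (rule suminf_pos2[OF assms(2) _ w0]) (use wt_nonneg assms in auto)
qed

lemma shift_sums:
  fixes d f :: "nat \<Rightarrow> real"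
  assumes "(\<lambda>n. d n * x ^ n) sums L" "f 0 = 0" "\<And>n. f (Suc n) = x * (d n * x ^ n)"
  shows "f sums (x * L)"
proof -
  have "(\<lambda>n. x * (d n * x ^ n)) sums (x * L)" by (rule sums_mult[OF assms(1)])
  then have "(\<lambda>n. f (Suc n)) sums (x * L)" using assms(3) by simp
  then show ?thesis using sums_Suc_iff[of f] assms(2) by simp
qed

lemma diffs_cZ: "x * (diffs cZ n * x ^ n) = real (Suc n) * wt g x (Suc n)"
  unfolding diffs_def wt_cZ by (simp add: algebra_simps)

lemma diffs_cM: "x * (diffs cM n * x ^ n) = (real (Suc n))^2 * wt g x (Suc n)"
  unfolding diffs_def wt_cZ cM_def cZ_def by (simp add: algebra_simps power2_eq_square)

context
  fixes x y :: real
  assumes ady: "adm_fug g y" and x0: "0 < x" and xy: "x < y"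
begin

lemma sm_cZ: "norm z < y \<Longrightarrow> summable (\<lambda>n. cZ n * z ^ n)"
proof -
  assume z: "norm z < y"
  have s: "summable (\<lambda>n. cZ n * y ^ n)" using ady unfolding adm_fug_def wt_cZ by simp
  have "norm z < norm y" using z x0 xy by simp
  then show ?thesis by (rule powser_inside[OF s])
qed

lemma sm_cM: "norm z < y \<Longrightarrow> summable (\<lambda>n. cM n * z ^ n)"
proof -
  assume z: "norm z < y"
  have s: "summable (\<lambda>n. cM n * y ^ n)" using ady unfolding adm_fug_def wt_cM[symmetric] by simp
  have "norm z < norm y" using z x0 xy by simp
  then show ?thesis by (rule powser_inside[OF s])
qed

lemma Mf_sums: "(\<lambda>k. real k * wt g x k) sums Mf x"
proof -
  have "adm_fug g x" using adm_le[OF ady] x0 xy by simp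
  then have "summable (\<lambda>k. real k * wt g x k)" unfolding adm_fug_def by blast
  then show ?thesis unfolding Mf_def by (rule summable_sums)
qed

lemma Zf_sums: "wt g x sums Zf g x"
proof -
  have "adm_fug g x" using adm_le[OF ady] x0 xy by simp
  then have "summable (wt g x)" unfolding adm_fug_def by blast
  then show ?thesis unfolding Zf_def by (rule summable_sums)
qed

lemma diffsZ_sums: "(\<lambda>n. diffs cZ n * x ^ n) sums (Mf x / x)"
proof -
  have s: "summable (\<lambda>n. diffs cZ n * x ^ n)"
    by (rule termdiff_converges[where K=y]) (use x0 xy sm_cZ in auto)
  then have "(\<lambda>n. diffs cZ n * x ^ n) sums (suminf (\<lambda>n. diffs cZ n * x ^ n))" by (rule summable_sums)
  then have "(\<lambda>k. real k * wt g x k) sums (x * suminf (\<lambda>n. diffs cZ n * x ^ n))"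
    by (rule shift_sums) (simp_all add: diffs_cZ)
  then have "Mf x = x * suminf (\<lambda>n. diffs cZ n * x ^ n)" using Mf_sums sums_unique2 by blast
  then show ?thesis using s x0 by (simp add: summable_sums)
qed

lemma Sf_sums: "(\<lambda>k. (real k)^2 * wt g x k) sums Sf x"
  and diffsM_sums: "(\<lambda>n. diffs cM n * x ^ n) sums (Sf x / x)"
proof -
  have s: "summable (\<lambda>n. diffs cM n * x ^ n)"
    by (rule termdiff_converges[where K=y]) (use x0 xy sm_cM in auto)
  then have "(\<lambda>n. diffs cM n * x ^ n) sums (suminf (\<lambda>n. diffs cM n * x ^ n))" by (rule summable_sums)
  then have a: "(\<lambda>k. (real k)^2 * wt g x k) sums (x * suminf (\<lambda>n. diffs cM n * x ^ n))"
    by (rule shift_sums) (simp_all add: diffs_cM)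
  then show "(\<lambda>k. (real k)^2 * wt g x k) sums Sf x" unfolding Sf_def by (simp add: sums_iff)
  then have "Sf x = x * suminf (\<lambda>n. diffs cM n * x ^ n)" using a sums_unique2 by blast
  then show "(\<lambda>n. diffs cM n * x ^ n) sums (Sf x / x)" using s x0 by (simp add: summable_sums)
qed

lemma Zf_deriv: "(Zf g has_real_derivative Mf x / x) (at x)"
proof -
  have "summable (\<lambda>n. cZ n * ((x + y)/2) ^ n)" using x0 xy by (intro sm_cZ) auto
  from termdiffs_strong[OF this, of x] x0 xy
  have "((\<lambda>x. \<Sum>n. cZ n * x ^ n) has_real_derivative (\<Sum>n. diffs cZ n * x ^ n)) (at x)" by simp
  then show ?thesis unfolding Zf_eq using diffsZ_sums[THEN sums_unique] by simp
qed

lemma Mf_deriv: "(Mf has_real_derivative Sf x / x) (at x)"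
proof -
  have "summable (\<lambda>n. cM n * ((x + y)/2) ^ n)" using x0 xy by (intro sm_cM) auto
  from termdiffs_strong[OF this, of x] x0 xy
  have "((\<lambda>x. \<Sum>n. cM n * x ^ n) has_real_derivative (\<Sum>n. diffs cM n * x ^ n)) (at x)" by simp
  then show ?thesis unfolding Mf_eq using diffsM_sums[THEN sums_unique] by simp
qed

lemma Zf_pos': "Zf g x > 0"
  using Zf_pos[of x] Zf_sums x0 by (simp add: sums_iff)

lemma meanf_eq: "meanf g = (\<lambda>x. Mf x / Zf g x)"
  unfolding meanf_def[abs_def] Mf_def ..

lemma meanf_deriv: "(meanf g has_real_derivative (Sf x * Zf g x - (Mf x)^2) / (x * (Zf g x)^2)) (at x)"
proof -
  have "((\<lambda>x. Mf x / Zf g x) has_real_derivative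
          ((Sf x / x) * Zf g x - Mf x * (Mf x / x)) / (Zf g x * Zf g x)) (at x)"
    by (rule DERIV_divide[OF Mf_deriv Zf_deriv]) (use Zf_pos' in simp)
  moreover have "((Sf x / x) * Zf g x - Mf x * (Mf x / x)) / (Zf g x * Zf g x)
      = (Sf x * Zf g x - (Mf x)^2) / (x * (Zf g x)^2)"
    using x0 Zf_pos' by (simp add: field_simps power2_eq_square)
  ultimately show ?thesis unfolding meanf_eq by simp
qed

lemma var_pos: "Sf x * Zf g x - (Mf x)^2 > 0"
proof -
  define mu where "mu = Mf x / Zf g x"
  define t where "t k = wt g x k * (real k - mu)^2" for k
  have "(\<lambda>k. (real k)^2 * wt g x k - 2 * mu * (real k * wt g x k) + mu^2 * wt g x k) sums
          (Sf x - 2 * mu * Mf x + mu^2 * Zf g x)"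
    by (intro sums_add sums_diff sums_mult Sf_sums Mf_sums Zf_sums)
  moreover have "\<And>k. (real k)^2 * wt g x k - 2 * mu * (real k * wt g x k) + mu^2 * wt g x k = t k"
    unfolding t_def by (simp add: power2_eq_square algebra_simps)
  ultimately have ts: "t sums (Sf x - 2 * mu * Mf x + mu^2 * Zf g x)" by simp
  have tnn: "t k \<ge> 0" for k unfolding t_def using wt_nonneg[of x k] x0 by simp
  have "t 0 > 0 \<or> t 1 > 0"
  proof (cases "mu = 0")
    case True
    then show ?thesis unfolding t_def using wt_pos[OF x0, of 1] by simp
  next
    case False
    then show ?thesis unfolding t_def by simp
  qed
  then have "0 < suminf t"
    using suminf_pos2[OF sums_summable[OF ts] tnn] by blast
  then have "0 < Sf x - 2 * mu * Mf x + mu^2 * Zf g x" using ts sums_unique by metis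
  also have "\<dots> = (Sf x * Zf g x - (Mf x)^2) / Zf g x"
    unfolding mu_def using Zf_pos' by (simp add: field_simps power2_eq_square)
  finally show ?thesis using Zf_pos' by (simp add: zero_less_divide_iff)
qed

lemma meanf_deriv_pos: "(Sf x * Zf g x - (Mf x)^2) / (x * (Zf g x)^2) > 0"
  using var_pos x0 Zf_pos' by simp

end

lemma wt_cont_sum: "uniform_limit {0..y} (\<lambda>n x. \<Sum>i<n. f i * wt g x i) (\<lambda>x. suminf (\<lambda>i. f i * wt g x i)) sequentially"
  if "summable (\<lambda>i. f i * wt g y i)" "\<And>i. f i \<ge> 0" for f y
proof (rule Weierstrass_m_test)
  fix n x assume "x \<in> {0..y}"
  then show "norm (f n * wt g x n) \<le> f n * wt g y n"
    using wt_nonneg[of x n] wt_mono[of x y n] that(2)[of n] by (auto intro!: mult_left_mono)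
qed (fact that)

lemma cont_series:
  assumes "summable (\<lambda>i. f i * wt g y i)" "\<And>i. f i \<ge> 0"
  shows "continuous_on {0..y} (\<lambda>x. suminf (\<lambda>i. f i * wt g x i))"
proof (rule uniform_limit_theorem[OF _ wt_cont_sum[OF assms]])
  show "\<forall>\<^sub>F n in sequentially. continuous_on {0..y} (\<lambda>x. \<Sum>i<n. f i * wt g x i)"
    unfolding wt_def by (intro always_eventually allI continuous_intros) (use gfact_pos in \<open>auto simp: less_imp_neq[symmetric]\<close>)
qed simp

lemma meanf_cont:
  assumes "adm_fug g y"
  shows "continuous_on {0..y} (meanf g)"
proof -
  have c1: "continuous_on {0..y} (\<lambda>x. suminf (\<lambda>i. real i * wt g x i))"
    by (rule cont_series) (use assms in \<open>auto simp: adm_fug_def\<close>)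
  have c2: "continuous_on {0..y} (\<lambda>x. suminf (\<lambda>i. 1 * wt g x i))"
    by (rule cont_series) (use assms in \<open>auto simp: adm_fug_def\<close>)
  have pos: "x \<in> {0..y} \<Longrightarrow> Zf g x \<noteq> 0" for x
    using Zf_pos[of x] adm_le[OF assms, of x] by (auto simp: adm_fug_def)
  show ?thesis unfolding meanf_def[abs_def]
    by (rule continuous_on_divide[OF c1]) (use c2 pos in \<open>simp_all add: Zf_def[abs_def]\<close>)
qed

lemma meanf_strict_mono:
  assumes "adm_fug g a" "adm_fug g b" "a < b"
  shows "meanf g a < meanf g b"
proof (rule DERIV_pos_imp_increasing_open[OF assms(3)])
  fix x assume "a < x" "x < b"
  moreover have "a \<ge> 0" using assms by (simp add: adm_fug_def)
  ultimately have "0 < x" "x < b" by auto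
  then show "\<exists>d. (meanf g has_real_derivative d) (at x) \<and> d > 0"
    using meanf_deriv[OF assms(2) \<open>0 < x\<close> \<open>x < b\<close>] meanf_deriv_pos[OF assms(2) \<open>0 < x\<close> \<open>x < b\<close>] by blast
next
  have a0: "a \<ge> 0" using assms by (simp add: adm_fug_def)
  show "continuous_on {a..b} (meanf g)"
    by (rule continuous_on_subset[OF meanf_cont[OF assms(2)]]) (use a0 in auto)
qed

lemma meanf_zero: "meanf g 0 = 0"
proof -
  have "(\<lambda>k. real k * wt g 0 k) = (\<lambda>k. 0)" by (auto simp: fun_eq_iff wt_def zero_power)
  then show ?thesis unfolding meanf_def by simp
qed

lemma fug_unique:
  assumes "adm_fug g a" "adm_fug g b" "meanf g a = meanf g b"
  shows "a = b"
  using meanf_strict_mono[OF assms(1,2)] meanf_strict_mono[OF assms(2,1)] assms(3)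
  by (cases a b rule: linorder_cases) auto

lemma fug_dom:
  assumes "rho \<in> rho_dom g"
  shows "adm_fug g (fug g rho) \<and> meanf g (fug g rho) = rho"
proof -
  obtain phi where phi: "adm_fug g phi" "meanf g phi = rho" using assms by (auto simp: rho_dom_def)
  show ?thesis unfolding fug_def
    by (rule theI[of _ phi]) (use phi fug_unique in auto)
qed

lemma fug_meanf:
  assumes "adm_fug g a"
  shows "fug g (meanf g a) = a"
proof -
  have "meanf g a \<in> rho_dom g" using assms by (auto simp: rho_dom_def)
  from fug_dom[OF this] show ?thesis using fug_unique assms by blast
qed

lemma nu1_eq: "nu1 g rho m = wt g (fug g rho) m / Zf g (fug g rho)"
  unfolding nu1_def ..

lemma fug_deriv:
  assumes int: "rho0 \<in> interior (rho_dom g)" and r0: "rho0 > 0"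
  shows "fug g rho0 > 0"
    and "\<exists>psi. adm_fug g psi \<and> fug g rho0 < psi"
    and "(fug g has_real_derivative
           inverse ((Sf (fug g rho0) * Zf g (fug g rho0) - (Mf (fug g rho0))^2) / (fug g rho0 * (Zf g (fug g rho0))^2))) (at rho0)"
proof -
  obtain e where e: "e > 0" "ball rho0 e \<subseteq> rho_dom g" using int mem_interior by blast
  define phi0 where "phi0 = fug g rho0"
  have d0: "rho0 \<in> rho_dom g" using e by auto
  note f0 = fug_dom[OF d0, folded phi0_def]
  have phi0nn: "phi0 \<ge> 0" using f0 by (simp add: adm_fug_def)
  show phipos: "fug g rho0 > 0"
    using f0 phi0nn meanf_zero r0 unfolding phi0_def[symmetric] by (cases "phi0 = 0") auto
  define psi where "psi = fug g (rho0 + e/2)"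
  have "rho0 + e/2 \<in> rho_dom g" using e by (intro subsetD[OF e(2)]) (auto simp: dist_real_def)
  note fpsi = fug_dom[OF this, folded psi_def]
  have psigt: "phi0 < psi"
  proof (rule ccontr)
    assume "\<not> phi0 < psi"
    then have "psi < phi0 \<or> psi = phi0" by auto
    then show False
      using meanf_strict_mono[of psi phi0] f0 fpsi e by auto
  qed
  show "\<exists>psi. adm_fug g psi \<and> fug g rho0 < psi" using fpsi psigt unfolding phi0_def by blast
  have phipos': "phi0 > 0" using phipos phi0_def by simp
  define d where "d = min phi0 (psi - phi0) / 2"
  have dpos: "d > 0" using phipos' psigt by (simp add: d_def)
  have zrange: "0 < z \<and> z < psi" if "\<bar>z - phi0\<bar> \<le> d" for z
  proof -
    have "d \<le> phi0/2" "d \<le> (psi - phi0)/2" by (simp_all add: d_def)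
    moreover have "z - phi0 \<le> d" "phi0 - z \<le> d" using that by (simp_all add: abs_le_iff)
    ultimately show ?thesis using phipos' psigt by auto
  qed
  have cont: "isCont (fug g) (meanf g phi0)"
  proof (rule isCont_inverse_function[where f="meanf g" and x=phi0 and g="fug g", OF dpos])
    fix z assume "\<bar>z - phi0\<bar> \<le> d"
    note zr = zrange[OF this]
    show "fug g (meanf g z) = z"
      by (rule fug_meanf, rule adm_le[OF fpsi[THEN conjunct1]]) (use zr in auto)
    show "isCont (meanf g) z"
      by (rule DERIV_isCont, rule meanf_deriv[OF fpsi[THEN conjunct1]]) (use zr in auto)
  qed
  have cont': "isCont (fug g) rho0" using cont f0 by simp
  define D where "D = (Sf phi0 * Zf g phi0 - (Mf phi0)^2) / (phi0 * (Zf g phi0)^2)"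
  have der: "(meanf g has_real_derivative D) (at (fug g rho0))"
    unfolding D_def phi0_def[symmetric] by (rule meanf_deriv[OF fpsi[THEN conjunct1]]) (use phipos' psigt in auto)
  have Dpos: "D > 0" unfolding D_def by (rule meanf_deriv_pos[OF fpsi[THEN conjunct1]]) (use phipos' psigt in auto)
  have "(fug g has_real_derivative inverse D) (at rho0)"
  proof (rule DERIV_inverse_function[OF der _ _ _ _ cont'])
    show "D \<noteq> 0" using Dpos by simp
    show "rho0 - e < rho0" "rho0 < rho0 + e" using e by auto
    fix y assume "rho0 - e < y" "y < rho0 + e"
    then have "y \<in> rho_dom g" by (intro subsetD[OF e(2)]) (auto simp: dist_real_def)
    then show "meanf g (fug g y) = y" using fug_dom by blast
  qed
  then show "(fug g has_real_derivative
           inverse ((Sf (fug g rho0) * Zf g (fug g rho0) - (Mf (fug g rho0))^2) / (fug g rho0 * (Zf g (fug g rho0))^2))) (at rho0)"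
    unfolding D_def phi0_def .
qed

end



context zr
begin

lemma nu1_nonneg:
  assumes "rho \<in> rho_dom g" shows "nu1 g rho m \<ge> 0"
proof -
  have a: "adm_fug g (fug g rho)" using fug_dom[OF assms] by blast
  then have "Zf g (fug g rho) > 0" using Zf_pos by (auto simp: adm_fug_def)
  then show ?thesis unfolding nu1_eq using wt_nonneg a by (auto simp: adm_fug_def)
qed

lemma nu1_mean:
  assumes "rho \<in> rho_dom g" shows "(\<lambda>m. nu1 g rho m * real m) sums rho"
proof -
  have a: "adm_fug g (fug g rho)" and m: "meanf g (fug g rho) = rho" using fug_dom[OF assms] by blast+
  then have "(\<lambda>k. real k * wt g (fug g rho) k) sums (\<Sum>k. real k * wt g (fug g rho) k)"
    by (simp add: adm_fug_def summable_sums)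
  then have "(\<lambda>k. real k * wt g (fug g rho) k / Zf g (fug g rho)) sums meanf g (fug g rho)"
    unfolding meanf_def by (rule sums_divide)
  then show ?thesis unfolding nu1_eq m by (simp add: mult.commute)
qed

lemma nu1_g:
  assumes "rho \<in> rho_dom g" shows "(\<lambda>m. nu1 g rho m * g m) sums fug g rho"
proof -
  define phi where "phi = fug g rho"
  have a: "adm_fug g phi" using fug_dom[OF assms] phi_def by blast
  have Z: "Zf g phi > 0" using Zf_pos a by (auto simp: adm_fug_def)
  have "wt g phi sums Zf g phi" using a by (simp add: adm_fug_def Zf_def summable_sums)
  then have "(\<lambda>n. phi * wt g phi n) sums (phi * Zf g phi)" by (rule sums_mult)
  then have "(\<lambda>n. wt g phi (Suc n) * g (Suc n)) sums (phi * Zf g phi)" by (simp add: wt_g)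
  then have "(\<lambda>n. wt g phi n * g n) sums (phi * Zf g phi)" using sums_Suc_iff[of "\<lambda>n. wt g phi n * g n"] g0 by simp
  then have "(\<lambda>n. wt g phi n * g n / Zf g phi) sums (phi * Zf g phi / Zf g phi)" by (rule sums_divide)
  then show ?thesis using Z unfolding nu1_eq phi_def[symmetric] by (simp add: field_simps)
qed

lemma sum_p1:
  fixes a :: "'n::finite \<Rightarrow> real"
  assumes "(\<Sum>i\<in>UNIV. a i) > 0"
  shows "(\<Sum>i\<in>UNIV. a i / (\<Sum>i\<in>UNIV. a i)) = 1"
  using assms by (simp add: sum_divide_distrib[symmetric])

lemma nuA_nonneg:
  fixes a :: "'n::finite \<Rightarrow> real"
  assumes "\<And>i. a i > 0" "(\<Sum>i\<in>UNIV. a i) \<in> rho_dom g"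
  shows "nuA g a k \<ge> 0"
proof -
  have "(\<Sum>i\<in>UNIV. a i) > 0" using assms(1) by (intro sum_pos) auto
  then have "Tp (\<lambda>i. a i / (\<Sum>i\<in>UNIV. a i)) k \<ge> 0" unfolding Tp_def
    using assms(1) by (intro prod_nonneg) (auto intro: less_imp_le)
  then show ?thesis unfolding nuA_eq using nu1_nonneg[OF assms(2)] by simp
qed

lemma gtilde_eq:
  fixes a :: "'n::finite \<Rightarrow> real"
  assumes apos: "\<And>i. a i > 0" and dom: "(\<Sum>i\<in>UNIV. a i) \<in> rho_dom g"
  shows "gtilde g a i = a i / (\<Sum>i\<in>UNIV. a i) * fug g (\<Sum>i\<in>UNIV. a i)"
proof -
  define rho where "rho = (\<Sum>i\<in>UNIV. a i)"
  define p where "p = (\<lambda>i. a i / rho)"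
  have rpos: "rho > 0" unfolding rho_def using apos by (intro sum_pos) auto
  have p1: "(\<Sum>i\<in>UNIV. p i) = 1" unfolding p_def rho_def using sum_p1 rpos rho_def by blast
  have F: "Fm p (gi g i) m = g m * p i" for m
  proof (cases "m = 0")
    case True
    then show ?thesis by (simp add: Fm_zero gi_def g0)
  next
    case False
    have "Fm p (gi g i) m = Fm p (\<lambda>k. (g m / real m) * real (k i)) m"
      by (rule Fm_cong) (simp add: gi_def fib_def)
    also have "\<dots> = g m / real m * (real m * p i)" by (simp only: Fm_cmult Fm_k1[OF p1])
    also have "\<dots> = g m * p i" using False by simp
    finally show ?thesis .
  qed
  have "(\<lambda>m. nu1 g rho m * g m * p i) sums (fug g rho * p i)"
    using nu1_g[OF dom[folded rho_def]] by (rule sums_mult2)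
  then have S: "(\<lambda>m. nu1 g rho m * Fm p (gi g i) m) sums (fug g rho * p i)"
    by (simp add: F mult.assoc)
  have "gtilde g a i = fug g rho * p i" unfolding gtilde_def
  proof (rule EA_series)
    show "0 \<le> nuA g a k * gi g i k" for k
      using nuA_nonneg[OF apos dom] g_nonneg unfolding gi_def by (intro mult_nonneg_nonneg) auto
    show "(\<lambda>m. nu1 g (\<Sum>i\<in>UNIV. a i) m * Fm (\<lambda>i. a i / (\<Sum>i\<in>UNIV. a i)) (gi g i) m) sums (fug g rho * p i)"
      using S unfolding p_def rho_def .
  qed
  then show ?thesis unfolding p_def rho_def by simp
qed

lemma EA_k1:
  fixes a :: "'n::finite \<Rightarrow> real"
  assumes apos: "\<And>i. a i > 0" and dom: "(\<Sum>i\<in>UNIV. a i) \<in> rho_dom g"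
  shows "EA g a (\<lambda>k. real (k i)) = a i"
proof -
  define rho where "rho = (\<Sum>i\<in>UNIV. a i)"
  define p where "p = (\<lambda>i. a i / rho)"
  have rpos: "rho > 0" unfolding rho_def using apos by (intro sum_pos) auto
  have p1: "(\<Sum>i\<in>UNIV. p i) = 1" unfolding p_def rho_def using sum_p1 rpos rho_def by blast
  have "(\<lambda>m. nu1 g rho m * real m * p i) sums (rho * p i)"
    using nu1_mean[OF dom[folded rho_def]] by (rule sums_mult2)
  then have S: "(\<lambda>m. nu1 g rho m * Fm p (\<lambda>k. real (k i)) m) sums (rho * p i)"
    by (simp add: Fm_k1[OF p1] mult.assoc)
  have "EA g a (\<lambda>k. real (k i)) = rho * p i"
  proof (rule EA_series)
    show "0 \<le> nuA g a k * real (k i)" for k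
      using nuA_nonneg[OF apos dom] by simp
    show "(\<lambda>m. nu1 g (\<Sum>i\<in>UNIV. a i) m * Fm (\<lambda>i. a i / (\<Sum>i\<in>UNIV. a i)) (\<lambda>k. real (k i)) m) sums (rho * p i)"
      using S unfolding p_def rho_def .
  qed
  then show ?thesis unfolding p_def using rpos by simp
qed

lemma EA_k2:
  fixes a :: "'n::finite \<Rightarrow> real"
  assumes apos: "\<And>i. a i > 0" and dom: "(\<Sum>i\<in>UNIV. a i) \<in> rho_dom g"
    and E2: "(\<lambda>m. nu1 g (\<Sum>i\<in>UNIV. a i) m * (real m)^2) sums E2"
  shows "EA g a (\<lambda>k. real (k i) * real (k l)) =
     (E2 - (\<Sum>i\<in>UNIV. a i)) * (a i / (\<Sum>i\<in>UNIV. a i)) * (a l / (\<Sum>i\<in>UNIV. a i))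
     + (if i = l then a i else 0)"
proof -
  define rho where "rho = (\<Sum>i\<in>UNIV. a i)"
  define p where "p = (\<lambda>i. a i / rho)"
  have rpos: "rho > 0" unfolding rho_def using apos by (intro sum_pos) auto
  have p1: "(\<Sum>i\<in>UNIV. p i) = 1" unfolding p_def rho_def using sum_p1 rpos rho_def by blast
  have m1: "(\<lambda>m. nu1 g rho m * real m) sums rho" using nu1_mean[OF dom[folded rho_def]] .
  have "(\<lambda>m. (nu1 g rho m * (real m)^2 - nu1 g rho m * real m) * (p i * p l)
          + (if i = l then p i else 0) * (nu1 g rho m * real m))
        sums ((E2 - rho) * (p i * p l) + (if i = l then p i else 0) * rho)"
    by (intro sums_add sums_mult sums_mult2 sums_diff m1 E2[folded rho_def])
  moreover have "nu1 g rho m * Fm p (\<lambda>k. real (k i) * real (k l)) m =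
      (nu1 g rho m * (real m)^2 - nu1 g rho m * real m) * (p i * p l)
          + (if i = l then p i else 0) * (nu1 g rho m * real m)" for m
    unfolding Fm_k2[OF p1] by (simp add: algebra_simps power2_eq_square)
  ultimately have S: "(\<lambda>m. nu1 g rho m * Fm p (\<lambda>k. real (k i) * real (k l)) m) sums
       ((E2 - rho) * (p i * p l) + (if i = l then p i else 0) * rho)" by simp
  have "EA g a (\<lambda>k. real (k i) * real (k l)) = (E2 - rho) * (p i * p l) + (if i = l then p i else 0) * rho"
  proof (rule EA_series)
    show "0 \<le> nuA g a k * (real (k i) * real (k l))" for k
      using nuA_nonneg[OF apos dom] by simp
    show "(\<lambda>m. nu1 g (\<Sum>i\<in>UNIV. a i) m * Fm (\<lambda>i. a i / (\<Sum>i\<in>UNIV. a i)) (\<lambda>k. real (k i) * real (k l)) m) sums ((E2 - rho) * (p i * p l) + (if i = l then p i else 0) * rho)"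
      using S unfolding p_def rho_def .
  qed
  then show ?thesis unfolding p_def rho_def[symmetric] using rpos by simp
qed

end



lemma sum_upd_real: "(\<Sum>i\<in>UNIV. (a(j := t)) i) = t + ((\<Sum>i\<in>UNIV. a i) - a j)"
  for a :: "'n::finite \<Rightarrow> real"
proof -
  have "(\<Sum>i\<in>UNIV. a i) = a j + (\<Sum>i\<in>UNIV-{j}. a i)"
    by (simp add: sum.remove[of UNIV j])
  moreover have "(\<Sum>i\<in>UNIV. (a(j:=t)) i) = t + (\<Sum>i\<in>UNIV-{j}. a i)"
    by (subst sum.remove[of UNIV j]) (auto intro!: sum.cong)
  ultimately show ?thesis by simp
qed

theorem proposition7p4:
  fixes g :: "nat \<Rightarrow> real" and a0 :: "'n::finite \<Rightarrow> real"
  assumes n2: "CARD('n) \<ge> 2"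
    and g0: "g 0 = 0"
    and gpos: "\<And>k. k > 0 \<Longrightarrow> g k > 0"
    and apos: "\<And>i. a0 i > 0"
    and rho_int: "(\<Sum>i\<in>UNIV. a0 i) \<in> interior (rho_dom g)"
  shows "(FC g a0 \<longleftrightarrow>
            (\<forall>i j. i \<noteq> j \<longrightarrow> Gamma g a0 i j = 0 \<and>
                 gtilde g a0 i * Gamma g a0 j j = gtilde g a0 j * Gamma g a0 i i))
       \<and> (FC g a0 \<longleftrightarrow>
            (fug g has_real_derivative fug g (\<Sum>i\<in>UNIV. a0 i) / (\<Sum>i\<in>UNIV. a0 i))
              (at (\<Sum>i\<in>UNIV. a0 i)))
       \<and> ((fug g has_real_derivative fug g (\<Sum>i\<in>UNIV. a0 i) / (\<Sum>i\<in>UNIV. a0 i))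
              (at (\<Sum>i\<in>UNIV. a0 i))
            \<longleftrightarrow> sigma2 g (\<Sum>i\<in>UNIV. a0 i) = (\<Sum>i\<in>UNIV. a0 i))"
proof -
  interpret zr g by unfold_locales (use g0 gpos in auto)
  define c where "c = (\<Sum>i\<in>UNIV. a0 i)"
  have cpos: "c > 0" unfolding c_def using apos by (intro sum_pos) auto
  have int: "c \<in> interior (rho_dom g)" using rho_int c_def by simp
  obtain e where e: "e > 0" "ball c e \<subseteq> rho_dom g" using int mem_interior by blast
  have dom: "c \<in> rho_dom g" using e by auto
  define phi0 where "phi0 = fug g c"
  have phipos: "phi0 > 0" using fug_deriv(1)[OF int cpos] phi0_def by simp
  obtain psi where psi: "adm_fug g psi" "phi0 < psi" using fug_deriv(2)[OF int cpos] phi0_def by blast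
  have f0: "adm_fug g phi0" "meanf g phi0 = c" using fug_dom[OF dom] phi0_def by auto
  define Z where "Z = Zf g phi0"
  define M where "M = Mf phi0"
  define S where "S = Sf phi0"
  have Zpos: "Z > 0" unfolding Z_def by (rule Zf_pos'[OF psi(1) phipos psi(2)])
  have "meanf g phi0 = M / Z" unfolding meanf_def M_def Mf_def Z_def ..
  then have MZ: "M = c * Z" using f0(2) Zpos by (simp add: field_simps)
  have E2: "(\<lambda>m. nu1 g c m * (real m)^2) sums (S / Z)"
  proof -
    have "(\<lambda>k. (real k)^2 * wt g phi0 k / Z) sums (S / Z)"
      unfolding S_def by (rule sums_divide, rule Sf_sums[OF psi(1) phipos psi(2)])
    then show ?thesis unfolding nu1_eq phi0_def[symmetric] Z_def by (simp add: mult.commute)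
  qed
  define sig where "sig = sigma2 g c"
  have sig_eq: "sig = S / Z - c^2"
    unfolding sig_def sigma2_def using E2[THEN sums_unique] by (simp add: mult.commute)
  have SZM: "S * Z - M^2 = Z^2 * sig" unfolding sig_eq MZ using Zpos by (simp add: field_simps power2_eq_square)
  have sigpos: "sig > 0"
  proof -
    have "S * Z - M^2 > 0" unfolding S_def Z_def M_def by (rule var_pos[OF psi(1) phipos psi(2)])
    then show ?thesis unfolding SZM using Zpos by (simp add: zero_less_mult_iff)
  qed
  have der: "(fug g has_real_derivative phi0 / sig) (at c)"
  proof -
    have "(fug g has_real_derivative inverse ((S * Z - M^2) / (phi0 * Z^2))) (at c)"
      using fug_deriv(3)[OF int cpos] unfolding S_def Z_def M_def phi0_def .
    moreover have "inverse ((S * Z - M^2) / (phi0 * Z^2)) = phi0 / sig"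
      unfolding SZM using Zpos phipos sigpos by (simp add: field_simps)
    ultimately show ?thesis by simp
  qed
  have conj3: "(fug g has_real_derivative phi0 / c) (at c) \<longleftrightarrow> sig = c"
  proof
    assume "(fug g has_real_derivative phi0 / c) (at c)"
    then have "phi0 / c = phi0 / sig" using der DERIV_unique by blast
    then show "sig = c" using phipos cpos sigpos by (simp add: field_simps)
  next
    assume "sig = c" then show "(fug g has_real_derivative phi0 / c) (at c)" using der by simp
  qed
  define H where "H s = fug g s / s" for s
  have Hiff: "(H has_real_derivative 0) (at c) \<longleftrightarrow> (fug g has_real_derivative phi0 / c) (at c)"
  proof
    assume "(fug g has_real_derivative phi0 / c) (at c)"
    from DERIV_divide[OF this DERIV_ident] cpos
    have "((\<lambda>s. fug g s / s) has_real_derivative (phi0 / c * c - phi0 * 1) / (c * c)) (at c)"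
      unfolding phi0_def by simp
    then show "(H has_real_derivative 0) (at c)" unfolding H_def[abs_def] using cpos by simp
  next
    assume h: "(H has_real_derivative 0) (at c)"
    from DERIV_mult[OF DERIV_ident h]
    have "((\<lambda>s. s * H s) has_real_derivative 1 * H c + 0 * c) (at c)" .
    then have d: "((\<lambda>s. s * H s) has_real_derivative phi0 / c) (at c)"
      unfolding H_def phi0_def by simp
    have ev: "eventually (\<lambda>s. fug g s = s * H s) (nhds c)"
    proof -
      have "eventually (\<lambda>s. s \<in> {0<..}) (nhds c)" by (rule eventually_nhds_in_open) (use cpos in auto)
      then show ?thesis by eventually_elim (simp add: H_def)
    qed
    show "(fug g has_real_derivative phi0 / c) (at c)"
      using d DERIV_cong_ev[OF refl ev refl] by simp
  qed
  have gt_loc: "eventually (\<lambda>t. gtilde g (a0(j := t)) i = (a0(j := t)) i * H (t + (c - a0 j))) (nhds (a0 j))"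
    for i j
  proof -
    have "eventually (\<lambda>t. t \<in> ball (a0 j) (min (a0 j) e)) (nhds (a0 j))"
      using apos[of j] e(1) by (intro eventually_nhds_in_open) auto
    then show ?thesis
    proof eventually_elim
      case (elim t)
      then have tpos: "t > 0" and td: "\<bar>t - a0 j\<bar> < e" by (auto simp: dist_real_def)
      have ap: "\<And>k. (a0(j := t)) k > 0" using apos tpos by simp
      have sm: "(\<Sum>k\<in>UNIV. (a0(j := t)) k) = t + (c - a0 j)" unfolding c_def by (rule sum_upd_real)
      have "t + (c - a0 j) \<in> ball c e" using td by (simp add: dist_real_def abs_minus_commute)
      then have "(\<Sum>k\<in>UNIV. (a0(j := t)) k) \<in> rho_dom g" using e sm by auto
      from gtilde_eq[OF ap this, of i]
      have eq: "gtilde g (a0(j := t)) i = (a0(j := t)) i / (t + (c - a0 j)) * fug g (t + (c - a0 j))"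
        unfolding sm .
      show ?case by (simp only: eq H_def times_divide_eq_right times_divide_eq_left mult.commute)
    qed
  qed
  have off: "((\<lambda>t. gtilde g (a0(j := t)) i) has_real_derivative 0) (at (a0 j)) \<longleftrightarrow> (H has_real_derivative 0) (at c)"
    if "i \<noteq> j" for i j
  proof -
    have ev: "eventually (\<lambda>t. gtilde g (a0(j := t)) i = a0 i * H (t + (c - a0 j))) (nhds (a0 j))"
      using gt_loc[of j i] that by simp
    have "((\<lambda>t. gtilde g (a0(j := t)) i) has_real_derivative 0) (at (a0 j)) \<longleftrightarrow>
          ((\<lambda>t. a0 i * H (t + (c - a0 j))) has_real_derivative 0) (at (a0 j))"
      by (rule DERIV_cong_ev[OF refl ev refl])
    also have "\<dots> \<longleftrightarrow> ((\<lambda>t. H (t + (c - a0 j))) has_real_derivative 0) (at (a0 j))"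
    proof
      assume "((\<lambda>t. a0 i * H (t + (c - a0 j))) has_real_derivative 0) (at (a0 j))"
      from DERIV_cmult[OF this, of "1 / a0 i"] apos[of i]
      show "((\<lambda>t. H (t + (c - a0 j))) has_real_derivative 0) (at (a0 j))" by simp
    next
      assume "((\<lambda>t. H (t + (c - a0 j))) has_real_derivative 0) (at (a0 j))"
      from DERIV_cmult[OF this, of "a0 i"]
      show "((\<lambda>t. a0 i * H (t + (c - a0 j))) has_real_derivative 0) (at (a0 j))" by simp
    qed
    also have "\<dots> \<longleftrightarrow> (H has_real_derivative 0) (at (a0 j + (c - a0 j)))"
      by (rule DERIV_shift[symmetric])
    finally show ?thesis by simp
  qed
  have diag: "((\<lambda>t. gtilde g (a0(i := t)) i) has_real_derivative H c) (at (a0 i))"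
    if h: "(H has_real_derivative 0) (at c)" for i
  proof -
    have ev: "eventually (\<lambda>t. gtilde g (a0(i := t)) i = t * H (t + (c - a0 i))) (nhds (a0 i))"
      using gt_loc[of i i] by simp
    have "(H has_real_derivative 0) (at (a0 i + (c - a0 i)))" using h by simp
    then have "((\<lambda>t. H (t + (c - a0 i))) has_real_derivative 0) (at (a0 i))" by (simp only: DERIV_shift)
    from DERIV_mult[OF DERIV_ident this]
    have "((\<lambda>t. t * H (t + (c - a0 i))) has_real_derivative H c) (at (a0 i))" by simp
    then show ?thesis using DERIV_cong_ev[OF refl ev refl] by simp
  qed
  obtain i0 j0 :: 'n where ij0: "i0 \<noteq> j0"
  proof -
    have "\<exists>i j::'n. i \<noteq> j"
    proof (rule ccontr)
      assume "\<not> (\<exists>i j::'n. i \<noteq> j)"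
      then have "(UNIV :: 'n set) = {undefined}" by auto
      then have "CARD('n) = 1" by (metis card.empty card_insert_disjoint empty_iff finite.emptyI One_nat_def)
      with n2 show False by simp
    qed
    then show ?thesis using that by blast
  qed
  have FCiff: "FC g a0 \<longleftrightarrow> (H has_real_derivative 0) (at c)"
  proof
    assume "FC g a0"
    then obtain lam where "\<forall>i j. i \<noteq> j \<longrightarrow> ((\<lambda>t. gtilde g (a0(j := t)) i) has_real_derivative 0) (at (a0 j))"
      unfolding FC_def by blast
    then show "(H has_real_derivative 0) (at c)" using off[OF ij0] ij0 by blast
  next
    assume h: "(H has_real_derivative 0) (at c)"
    show "FC g a0" unfolding FC_def
      by (rule exI[of _ "H c"]) (use diag[OF h] off h in blast)
  qed
  define p where "p i = a0 i / c" for i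
  have ppos: "p i > 0" for i unfolding p_def using apos cpos by simp
  have a_p: "a0 i = c * p i" for i unfolding p_def using cpos by simp
  have gt0: "gtilde g a0 i = p i * phi0" for i
    using gtilde_eq[OF apos dom[unfolded c_def]] unfolding p_def c_def phi0_def by simp
  have Gam: "Gamma g a0 i l = (sig - c) * p i * p l + (if i = l then a0 i else 0)" for i l
  proof -
    have "EA g a0 (\<lambda>k. real (k i) * real (k l)) = (S / Z - c) * p i * p l + (if i = l then a0 i else 0)"
      using EA_k2[OF apos dom[unfolded c_def] E2[unfolded c_def]] unfolding p_def c_def by simp
    moreover have "EA g a0 (\<lambda>k. real (k i)) = a0 i" "EA g a0 (\<lambda>k. real (k l)) = a0 l"
      using EA_k1[OF apos dom[unfolded c_def]] by auto
    ultimately show ?thesis unfolding Gamma_def sig_eq a_p by (simp add: algebra_simps power2_eq_square)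
  qed
  have cond1: "(\<forall>i j. i \<noteq> j \<longrightarrow> Gamma g a0 i j = 0 \<and>
                 gtilde g a0 i * Gamma g a0 j j = gtilde g a0 j * Gamma g a0 i i) \<longleftrightarrow> sig = c"
  proof
    assume "\<forall>i j. i \<noteq> j \<longrightarrow> Gamma g a0 i j = 0 \<and>
                 gtilde g a0 i * Gamma g a0 j j = gtilde g a0 j * Gamma g a0 i i"
    then have "Gamma g a0 i0 j0 = 0" using ij0 by blast
    then have "(sig - c) * (p i0 * p j0) = 0" unfolding Gam using ij0 by (simp add: mult.assoc)
    moreover have "p i0 * p j0 \<noteq> 0" using ppos[of i0] ppos[of j0] by simp
    ultimately show "sig = c" by simp
  next
    assume "sig = c"
    then show "\<forall>i j. i \<noteq> j \<longrightarrow> Gamma g a0 i j = 0 \<and>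
                 gtilde g a0 i * Gamma g a0 j j = gtilde g a0 j * Gamma g a0 i i"
      unfolding Gam gt0 by (simp add: a_p algebra_simps)
  qed
  show ?thesis
    unfolding c_def[symmetric] phi0_def[symmetric] sig_def[symmetric]
    using cond1 FCiff Hiff conj3 by blast
qed


end
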